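(* For all integers $k\ge 1$ and $n>2k$, $b_{2k}(n)-b_{2k}(n-1)\ge\frac12\binom{n-1}{2k-1}$.
   Context: For $n$ and $t$ with $n/2+t$ a nonnegative integer and $|t|\le n/2$, ${\cal B}^{(2k)}(n,t)$ is the $2k$-uniform hypergraph whose vertex set of size $n$ is partitioned into $V_1,V_2$ with $|V_1|=n/2+t$, $|V_2|=n/2-t$, and whose edges are all $2k$-subsets meeting each of $V_1,V_2$ in an odd number of elements; $b_{2k}(n)$ is the maximum of its number of edges over all admissible $t$. *)

theory Defs
  imports Complex_Main
begin

definition admissible :: "nat \<Rightarrow> real \<Rightarrow> bool" where
  "admissible n t \<longleftrightarrow> real n / 2 + t \<in> \<nat> \<and> \<bar>t\<bar> \<le> real n / 2"

definition part1 :: "nat \<Rightarrow> real \<Rightarrow> nat set" where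
  "part1 n t = {0..<nat \<lfloor>real n / 2 + t\<rfloor>}"

definition part2 :: "nat \<Rightarrow> real \<Rightarrow> nat set" where
  "part2 n t = {0..<n} - part1 n t"

definition B_edges :: "nat \<Rightarrow> nat \<Rightarrow> real \<Rightarrow> nat set set" where
  "B_edges k n t = {e. e \<subseteq> {0..<n} \<and> card e = 2 * k \<and>
      odd (card (e \<inter> part1 n t)) \<and> odd (card (e \<inter> part2 n t))}"

text \<open>b_{2k}(n): maximum number of edges over admissible t.\<close>
definition b :: "nat \<Rightarrow> nat \<Rightarrow> nat" where
  "b k n = Max {card (B_edges k n t) | t. admissible n t}"

end

theory Submission
  imports Defs
begin

definition NN :: "nat \<Rightarrow> nat \<Rightarrow> nat \<Rightarrow> nat" where
  "NN k a c = (\<Sum>i\<le>2*k. if odd i then (a choose i) * (c choose (2*k - i)) else 0)"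

lemma card_split:
  fixes A C :: "'a set"
  assumes fA: "finite A" and fC: "finite C" and dj: "A \<inter> C = {}"
  shows "card {e. e \<subseteq> A \<union> C \<and> card e = m \<and> P (card (e \<inter> A))}
       = (\<Sum>i\<le>m. if P i then (card A choose i) * (card C choose (m - i)) else 0)"
proof -
  define Sub where "Sub = (\<lambda>(X::'a set) i. {x. x \<subseteq> X \<and> card x = i})"
  define F where "F = (\<lambda>i. (\<lambda>(x,y). x \<union> y) ` (Sub A i \<times> Sub C (m - i)))"
  have eq: "{e. e \<subseteq> A \<union> C \<and> card e = m \<and> P (card (e \<inter> A))} = (\<Union>i\<in>{i\<in>{..m}. P i}. F i)"
  proof (rule set_eqI, rule iffI)
    fix e assume "e \<in> {e. e \<subseteq> A \<union> C \<and> card e = m \<and> P (card (e \<inter> A))}"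
    hence e: "e \<subseteq> A \<union> C" "card e = m" "P (card (e \<inter> A))" by auto
    have fe: "finite e" using e(1) fA fC finite_subset by blast
    have "e = (e \<inter> A) \<union> (e \<inter> C)" using e(1) by blast
    moreover have "card e = card (e \<inter> A) + card (e \<inter> C)"
      by (subst \<open>e = (e \<inter> A) \<union> (e \<inter> C)\<close>, rule card_Un_disjoint) (use fe dj in auto)
    ultimately have "(e \<inter> A, e \<inter> C) \<in> Sub A (card (e \<inter> A)) \<times> Sub C (m - card (e \<inter> A))"
      unfolding Sub_def using e by auto
    hence "e \<in> F (card (e \<inter> A))" unfolding F_def
      by (rule rev_image_eqI) (use \<open>e = (e \<inter> A) \<union> (e \<inter> C)\<close> in simp)
    moreover have "card (e \<inter> A) \<le> m" using \<open>card e = _ + _\<close> e by simp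
    ultimately show "e \<in> (\<Union>i\<in>{i\<in>{..m}. P i}. F i)" using e by auto
  next
    fix e assume "e \<in> (\<Union>i\<in>{i\<in>{..m}. P i}. F i)"
    then obtain i x y where i: "i \<le> m" "P i" and xy: "x \<subseteq> A" "card x = i" "y \<subseteq> C" "card y = m - i"
      and ee: "e = x \<union> y" unfolding F_def Sub_def by auto
    have fx: "finite x" "finite y" using xy fA fC finite_subset by auto
    have "card e = m" using ee card_Un_disjoint[OF fx] xy dj i by auto
    moreover have "e \<inter> A = x" using ee xy dj by auto
    ultimately show "e \<in> {e. e \<subseteq> A \<union> C \<and> card e = m \<and> P (card (e \<inter> A))}"
      using ee xy i by auto
  qed
  have fin: "\<And>i. finite (F i)"
  proof -
    have "Sub X j \<subseteq> Pow X" for X j unfolding Sub_def by auto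
    hence "finite (Sub A j)" "finite (Sub C j)" for j using fA fC finite_subset by blast+
    thus "finite (F i)" for i unfolding F_def by simp
  qed
  have disj: "\<forall>i\<in>{i\<in>{..m}. P i}. \<forall>j\<in>{i\<in>{..m}. P i}. i \<noteq> j \<longrightarrow> F i \<inter> F j = {}"
  proof (intro ballI impI)
    fix i j :: nat assume "i \<noteq> j"
    show "F i \<inter> F j = {}"
    proof (rule ccontr)
      assume "F i \<inter> F j \<noteq> {}"
      then obtain x y x' y' where "x \<subseteq> A" "card x = i" "y \<subseteq> C" "x' \<subseteq> A" "card x' = j" "y' \<subseteq> C"
        "x \<union> y = x' \<union> y'" unfolding F_def Sub_def by auto
      hence "x = x'" using dj by blast
      thus False using \<open>i \<noteq> j\<close> \<open>card x = i\<close> \<open>card x' = j\<close> by simp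
    qed
  qed
  have cF: "card (F i) = (card A choose i) * (card C choose (m - i))" for i
  proof -
    have "inj_on (\<lambda>(x,y). x \<union> y) (Sub A i \<times> Sub C (m - i))"
    proof (rule inj_onI)
      fix p q assume p: "p \<in> Sub A i \<times> Sub C (m - i)" and q: "q \<in> Sub A i \<times> Sub C (m - i)"
        and pq: "(\<lambda>(x,y). x \<union> y) p = (\<lambda>(x,y). x \<union> y) q"
      obtain x y where pe: "p = (x, y)" by (cases p)
      obtain x' y' where qe: "q = (x', y')" by (cases q)
      have u: "x \<union> y = x' \<union> y'" using pq pe qe by simp
      have "x \<subseteq> A" "y \<subseteq> C" "x' \<subseteq> A" "y' \<subseteq> C" using p q pe qe unfolding Sub_def by auto
      hence "x = (x \<union> y) \<inter> A" "x' = (x' \<union> y') \<inter> A" "y = (x \<union> y) \<inter> C" "y' = (x' \<union> y') \<inter> C"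
        using dj by auto
      hence "x = x'" "y = y'" using u by metis+
      thus "p = q" using pe qe by simp
    qed
    hence "card (F i) = card (Sub A i) * card (Sub C (m - i))"
      unfolding F_def by (simp add: card_image card_cartesian_product)
    also have "\<dots> = (card A choose i) * (card C choose (m - i))"
      unfolding Sub_def using n_subsets[OF fA] n_subsets[OF fC] by simp
    finally show ?thesis .
  qed
  have "card (\<Union>i\<in>{i\<in>{..m}. P i}. F i) = (\<Sum>i\<in>{i\<in>{..m}. P i}. card (F i))"
    by (rule card_UN_disjoint) (use fin disj in auto)
  also have "\<dots> = (\<Sum>i\<le>m. if P i then (card A choose i) * (card C choose (m - i)) else 0)"
    by (subst sum.inter_filter) (simp, rule sum.cong, simp, simp only: cF)
  finally show ?thesis using eq by simp
qed

lemma card_B: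
  assumes "real n / 2 + t = real a" "a \<le> n"
  shows "card (B_edges k n t) = NN k a (n - a)"
proof -
  have p1: "part1 n t = {0..<a}" unfolding part1_def using assms by simp
  have p2: "part2 n t = {a..<n}" unfolding part2_def p1 by auto
  have U: "{0..<n} = {0..<a} \<union> {a..<n}" using assms by auto
  have eq: "B_edges k n t = {e. e \<subseteq> {0..<a} \<union> {a..<n} \<and> card e = 2*k \<and> odd (card (e \<inter> {0..<a}))}"
  proof (rule set_eqI, rule iffI)
    fix e assume "e \<in> B_edges k n t"
    thus "e \<in> {e. e \<subseteq> {0..<a} \<union> {a..<n} \<and> card e = 2*k \<and> odd (card (e \<inter> {0..<a}))}"
      unfolding B_edges_def p1 p2 using U by simp
  next
    fix e assume e: "e \<in> {e. e \<subseteq> {0..<a} \<union> {a..<n} \<and> card e = 2*k \<and> odd (card (e \<inter> {0..<a}))}"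
    have fe: "finite e" using e by (metis (no_types, lifting) finite_Un finite_atLeastLessThan finite_subset mem_Collect_eq)
    have eU: "e = (e \<inter> {0..<a}) \<union> (e \<inter> {a..<n})" using e by blast
    have "(e \<inter> {0..<a}) \<inter> (e \<inter> {a..<n}) = {}" by auto
    hence "card ((e \<inter> {0..<a}) \<union> (e \<inter> {a..<n})) = card (e \<inter> {0..<a}) + card (e \<inter> {a..<n})"
      using card_Un_disjoint[of "e \<inter> {0..<a}" "e \<inter> {a..<n}"] fe by simp
    hence "card e = card (e \<inter> {0..<a}) + card (e \<inter> {a..<n})" using eU by metis
    moreover have "card e = 2 * k" "odd (card (e \<inter> {0..<a}))" using e by auto
    ultimately have "odd (card (e \<inter> {a..<n}))" by presburger
    moreover have "e \<subseteq> {0..<n}" using e U by simp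
    ultimately show "e \<in> B_edges k n t" unfolding B_edges_def p1 p2 using \<open>card e = 2 * k\<close> \<open>odd (card (e \<inter> {0..<a}))\<close> by blast
  qed
  have cs: "card {e. e \<subseteq> {0..<a} \<union> {a..<n} \<and> card e = 2*k \<and> odd (card (e \<inter> {0..<a}))} = (\<Sum>i\<le>2*k. if odd i then (card {0..<a::nat} choose i) * (card {a..<n} choose (2*k - i)) else 0)"
    by (rule card_split) auto
  show ?thesis unfolding eq cs NN_def card_atLeastLessThan diff_zero by (rule refl)
qed

lemma b_eq: "b k n = Max ((\<lambda>a. NN k a (n - a)) ` {..n})"
proof -
  have "{card (B_edges k n t) | t. admissible n t} = (\<lambda>a. NN k a (n - a)) ` {..n}"
  proof (rule set_eqI, rule iffI)
    fix x assume "x \<in> {card (B_edges k n t) | t. admissible n t}"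
    then obtain t where t: "admissible n t" "x = card (B_edges k n t)" by auto
    from t(1) have "real n / 2 + t \<in> \<nat>" unfolding admissible_def by blast
    then obtain a where a: "real n / 2 + t = real a" by (rule Nats_cases) simp
    have "\<bar>t\<bar> \<le> real n / 2" using t(1) unfolding admissible_def by blast
    hence "real a \<le> real n" using a unfolding abs_le_iff by linarith
    hence "a \<le> n" by simp
    thus "x \<in> (\<lambda>a. NN k a (n - a)) ` {..n}" using card_B[OF a] t by auto
  next
    fix x assume "x \<in> (\<lambda>a. NN k a (n - a)) ` {..n}"
    then obtain a where a: "a \<le> n" "x = NN k a (n - a)" by auto
    define t where "t = real a - real n / 2"
    have "real a \<le> real n" using a by simp
    hence "\<bar>real a - real n / 2\<bar> \<le> real n / 2" unfolding abs_le_iff by linarith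
    moreover have "real n / 2 + (real a - real n / 2) \<in> \<nat>" by simp
    ultimately have "admissible n t" unfolding admissible_def t_def by blast
    moreover have "x = card (B_edges k n t)" using card_B[of n t a] a t_def by simp
    ultimately show "x \<in> {card (B_edges k n t) | t. admissible n t}" by auto
  qed
  thus ?thesis unfolding b_def by simp
qed

lemma NN_Suc_a:
  assumes "k \<ge> 1"
  shows "NN k (Suc a) c = NN k a c + (\<Sum>j\<le>2*k-1. if even j then (a choose j) * (c choose (2*k - 1 - j)) else 0)"
proof -
  obtain M where M: "2 * k = Suc M" using assms by (cases "2*k") auto
  have M': "2 * k - 1 = M" using M by simp
  have "NN k (Suc a) c = (\<Sum>i\<le>2*k. (if odd i then (a choose i) * (c choose (2*k - i)) else 0)
        + (if odd i then (a choose (i - 1)) * (c choose (2*k - i)) else 0))"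
    unfolding NN_def
  proof (rule sum.cong)
    fix i assume "i \<in> {..2*k}"
    show "(if odd i then (Suc a choose i) * (c choose (2*k - i)) else 0) =
      (if odd i then (a choose i) * (c choose (2*k - i)) else 0) + (if odd i then (a choose (i - 1)) * (c choose (2*k - i)) else 0)"
    proof (cases "odd i")
      case True
      then obtain j where "i = Suc j" by (cases i) auto
      thus ?thesis using True by (simp add: algebra_simps)
    qed simp
  qed simp
  also have "\<dots> = NN k a c + (\<Sum>i\<le>Suc M. if odd i then (a choose (i - 1)) * (c choose (Suc M - i)) else 0)"
    unfolding NN_def sum.distrib M ..
  also have "(\<Sum>i\<le>Suc M. if odd i then (a choose (i - 1)) * (c choose (Suc M - i)) else 0)
      = (\<Sum>j\<le>M. if even j then (a choose j) * (c choose (M - j)) else 0)"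
    by (subst sum.atMost_Suc_shift) (simp cong: if_cong)
  finally show ?thesis unfolding M' .
qed

lemma NN_Suc_c:
  assumes "k \<ge> 1"
  shows "NN k a (Suc c) = NN k a c + (\<Sum>j\<le>2*k-1. if odd j then (a choose j) * (c choose (2*k - 1 - j)) else 0)"
proof -
  obtain M where M: "2 * k = Suc M" using assms by (cases "2*k") auto
  have M': "2 * k - 1 = M" using M by simp
  have "NN k a (Suc c) = (\<Sum>i\<le>2*k. (if odd i then (a choose i) * (c choose (2*k - i)) else 0)
        + (if odd i then (a choose i) * (c choose (2*k - 1 - i)) else 0))"
    unfolding NN_def
  proof (rule sum.cong)
    fix i assume i: "i \<in> {..2*k}"
    show "(if odd i then (a choose i) * (Suc c choose (2*k - i)) else 0) =
      (if odd i then (a choose i) * (c choose (2*k - i)) else 0) + (if odd i then (a choose i) * (c choose (2*k - 1 - i)) else 0)"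
    proof (cases "odd i")
      case True
      hence "i \<noteq> 2 * k" by auto
      hence "2 * k - i = Suc (2 * k - 1 - i)" using i by auto
      thus ?thesis using True by (simp add: algebra_simps)
    qed simp
  qed simp
  also have "\<dots> = NN k a c + (\<Sum>i\<le>Suc M. if odd i then (a choose i) * (c choose (M - i)) else 0)"
    unfolding NN_def sum.distrib M by (simp cong: if_cong)
  also have "(\<Sum>i\<le>Suc M. if odd i then (a choose i) * (c choose (M - i)) else 0)
      = (\<Sum>j\<le>M. if odd j then (a choose j) * (c choose (M - j)) else 0)"
    using M by (subst sum.atMost_Suc) presburger
  finally show ?thesis unfolding M' .
qed

lemma NN_ident:
  assumes "k \<ge> 1"
  shows "NN k (Suc a) c + NN k a (Suc c) = 2 * NN k a c + ((a + c) choose (2*k - 1))"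
proof -
  have "(\<Sum>j\<le>2*k-1. if even j then (a choose j) * (c choose (2*k - 1 - j)) else 0)
      + (\<Sum>j\<le>2*k-1. if odd j then (a choose j) * (c choose (2*k - 1 - j)) else 0)
      = (\<Sum>j\<le>2*k-1. (a choose j) * (c choose (2*k - 1 - j)))"
    by (subst sum.distrib[symmetric]) (auto intro: sum.cong)
  also have "\<dots> = (a + c) choose (2*k - 1)" by (rule vandermonde)
  finally show ?thesis unfolding NN_Suc_a[OF assms] NN_Suc_c[OF assms] by simp
qed

theorem lemma3p2:
  fixes k n :: nat
  assumes "k \<ge> 1" and "n > 2 * k"
  shows "real (b k n) - real (b k (n - 1)) \<ge> (1/2) * real ((n - 1) choose (2 * k - 1))"
proof -
  obtain m where n: "n = Suc m" using assms by (cases n) auto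
  have "b k m \<in> (\<lambda>a. NN k a (m - a)) ` {..m}" unfolding b_eq by (rule Max_in) auto
  then obtain a where a: "a \<le> m" "b k m = NN k a (m - a)" by blast
  have fin: "finite ((\<lambda>a. NN k a (Suc m - a)) ` {..Suc m})" by simp
  have "NN k (Suc a) (Suc m - Suc a) \<in> (\<lambda>a. NN k a (Suc m - a)) ` {..Suc m}"
    by (rule imageI) (use a in simp)
  hence "NN k (Suc a) (Suc m - Suc a) \<le> b k n" unfolding b_eq n using fin by (rule Max_ge[rotated])
  hence i1: "NN k (Suc a) (m - a) \<le> b k n" by simp
  have "NN k a (Suc m - a) \<in> (\<lambda>a. NN k a (Suc m - a)) ` {..Suc m}"
    by (rule imageI) (use a in simp)
  hence "NN k a (Suc m - a) \<le> b k n" unfolding b_eq n using fin by (rule Max_ge[rotated])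
  hence i2: "NN k a (Suc (m - a)) \<le> b k n" using a by (simp add: Suc_diff_le)
  have "a + (m - a) = m" using a by simp
  hence "NN k (Suc a) (m - a) + NN k a (Suc (m - a)) = 2 * b k m + (m choose (2*k-1))"
    using NN_ident[OF assms(1), of a "m - a"] a(2) by simp
  hence "2 * b k m + (m choose (2*k-1)) \<le> 2 * b k n" using i1 i2 by linarith
  hence "real (2 * b k m + (m choose (2*k-1))) \<le> real (2 * b k n)" by (simp only: of_nat_le_iff)
  hence "2 * real (b k m) + real (m choose (2*k-1)) \<le> 2 * real (b k n)" by simp
  thus ?thesis using n by simp
qed

end
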